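(* Let $X$ be a finite discrete space with at least two elements, $\Gamma$ a nonempty countable set, $\varphi:\Gamma\to\Gamma$ any map, and $\sigma_\varphi:X^\Gamma\to X^\Gamma$ the generalized shift. Then each of the following statements is equivalent to "$\varphi$ has at least one non-quasi-periodic point": (a) $(X^\Gamma,\sigma_\varphi)$ is uniform distributional chaotic; (b) it is DC$^u$1; (c) it is DC$^\infty$1; (d) it is DC$^2$1; (e) it is DC$^u$2; (f) it is DC$^\infty$2; (g) it is DC$^2$2.
   Context: $X^\Gamma$ carries the product topology; it is compact metrizable, and $d$ denotes a fixed compatible metric. The generalized shift is $\sigma_\varphi((x_\alpha)_{\alpha\in\Gamma})=(x_{\varphi(\alpha)})_{\alpha\in\Gamma}$. A point $\theta\in\Gamma$ is quasi-periodic for $\varphi$ if $\{\varphi^n(\theta):n\ge0\}$ is finite (equivalently, the orbit meets the set of periodic points); otherwise it is non-quasi-periodic. For a continuous $f:Y\to Y$ on a compact metric space $(Y,d)$, $x,y\in Y$, $t\in\mathbb R$, $n\ge1$, let $\xi(x,y,t,n)=\#\{i\in\{0,\dots,n-1\}:d(f^i(x),f^i(y))<t\}$, $F_{xy}(t)=\liminf_{n\to\infty}\xi(x,y,t,n)/n$, $F^*_{xy}(t)=\limsup_{n\to\infty}\xi(x,y,t,n)/n$. A pair $x,y$ is distributional scrambled of type 1 if there is $s>0$ with $F_{xy}(s)=0$ and $F^*_{xy}(s)=1$ for all $s>0$; of type 2 if there is $s>0$ with $F_{xy}(s)<1$ and $F^*_{xy}(s)=1$ for all $s>0$. A set $A\subseteq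 Y$ with at least two elements is distributional scrambled of type $i$ if every pair of distinct points of $A$ is. $f$ is DC$^u i$ (resp. DC$^\infty i$, DC$^2 i$) if $Y$ has an uncountable (resp. infinite, resp. at least two-element) distributional scrambled set of type $i$. $(Y,f)$ is uniform distributional chaotic if there are an uncountable distributional scrambled set $A$ of type 1 and $\varepsilon>0$ with $F_{xy}(\varepsilon)=0$ for all distinct $x,y\in A$. *)

theory Defs
  imports "HOL-Analysis.Analysis"
begin

definition gshift :: "('g \<Rightarrow> 'g) \<Rightarrow> ('g \<Rightarrow> 'x) \<Rightarrow> ('g \<Rightarrow> 'x)" where
  "gshift \<phi> x = (\<lambda>\<alpha>. x (\<phi> \<alpha>))"

definition quasi_periodic :: "('g \<Rightarrow> 'g) \<Rightarrow> 'g \<Rightarrow> bool" where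
  "quasi_periodic \<phi> \<theta> \<longleftrightarrow> finite {(\<phi> ^^ n) \<theta> | n. True}"

definition compatible_metric :: "(('g \<Rightarrow> 'x) \<Rightarrow> ('g \<Rightarrow> 'x) \<Rightarrow> real) \<Rightarrow> bool" where
  "compatible_metric d \<longleftrightarrow> Metric_space UNIV d \<and>
     Metric_space.mtopology UNIV d = product_topology (\<lambda>_. discrete_topology UNIV) UNIV"

definition xi :: "('a \<Rightarrow> 'a) \<Rightarrow> ('a \<Rightarrow> 'a \<Rightarrow> real) \<Rightarrow> 'a \<Rightarrow> 'a \<Rightarrow> real \<Rightarrow> nat \<Rightarrow> nat" where
  "xi f d x y t n = card {i. i < n \<and> d ((f ^^ i) x) ((f ^^ i) y) < t}"

definition Flow :: "('a \<Rightarrow> 'a) \<Rightarrow> ('a \<Rightarrow> 'a \<Rightarrow> real) \<Rightarrow> 'a \<Rightarrow> 'a \<Rightarrow> real \<Rightarrow> ereal" where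
  "Flow f d x y t = liminf (\<lambda>n. ereal (real (xi f d x y t n) / real n))"

definition Fup :: "('a \<Rightarrow> 'a) \<Rightarrow> ('a \<Rightarrow> 'a \<Rightarrow> real) \<Rightarrow> 'a \<Rightarrow> 'a \<Rightarrow> real \<Rightarrow> ereal" where
  "Fup f d x y t = limsup (\<lambda>n. ereal (real (xi f d x y t n) / real n))"

definition dc1_pair :: "('a \<Rightarrow> 'a) \<Rightarrow> ('a \<Rightarrow> 'a \<Rightarrow> real) \<Rightarrow> 'a \<Rightarrow> 'a \<Rightarrow> bool" where
  "dc1_pair f d x y \<longleftrightarrow> (\<exists>s>0. Flow f d x y s = 0) \<and> (\<forall>s>0. Fup f d x y s = 1)"

definition dc2_pair :: "('a \<Rightarrow> 'a) \<Rightarrow> ('a \<Rightarrow> 'a \<Rightarrow> real) \<Rightarrow> 'a \<Rightarrow> 'a \<Rightarrow> bool" where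
  "dc2_pair f d x y \<longleftrightarrow> (\<exists>s>0. Flow f d x y s < 1) \<and> (\<forall>s>0. Fup f d x y s = 1)"

definition dc1_scrambled :: "('a \<Rightarrow> 'a) \<Rightarrow> ('a \<Rightarrow> 'a \<Rightarrow> real) \<Rightarrow> 'a set \<Rightarrow> bool" where
  "dc1_scrambled f d A \<longleftrightarrow> (\<exists>x\<in>A. \<exists>y\<in>A. x \<noteq> y) \<and>
     (\<forall>x\<in>A. \<forall>y\<in>A. x \<noteq> y \<longrightarrow> dc1_pair f d x y)"

definition dc2_scrambled :: "('a \<Rightarrow> 'a) \<Rightarrow> ('a \<Rightarrow> 'a \<Rightarrow> real) \<Rightarrow> 'a set \<Rightarrow> bool" where
  "dc2_scrambled f d A \<longleftrightarrow> (\<exists>x\<in>A. \<exists>y\<in>A. x \<noteq> y) \<and>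
     (\<forall>x\<in>A. \<forall>y\<in>A. x \<noteq> y \<longrightarrow> dc2_pair f d x y)"

definition DCu1 where "DCu1 f d \<longleftrightarrow> (\<exists>A. uncountable A \<and> dc1_scrambled f d A)"
definition DCinf1 where "DCinf1 f d \<longleftrightarrow> (\<exists>A. infinite A \<and> dc1_scrambled f d A)"
definition DC21 where "DC21 f d \<longleftrightarrow> (\<exists>A. dc1_scrambled f d A)"
definition DCu2 where "DCu2 f d \<longleftrightarrow> (\<exists>A. uncountable A \<and> dc2_scrambled f d A)"
definition DCinf2 where "DCinf2 f d \<longleftrightarrow> (\<exists>A. infinite A \<and> dc2_scrambled f d A)"
definition DC22 where "DC22 f d \<longleftrightarrow> (\<exists>A. dc2_scrambled f d A)"

definition uniform_DC where
  "uniform_DC f d \<longleftrightarrow> (\<exists>A \<epsilon>. uncountable A \<and> dc1_scrambled f d A \<and> \<epsilon> > 0 \<and>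
     (\<forall>x\<in>A. \<forall>y\<in>A. x \<noteq> y \<longrightarrow> Flow f d x y \<epsilon> = 0))"

end

theory Submission
  imports Defs
begin


lemma seq_compact:
  fixes d :: "('g \<Rightarrow> 'x::finite) \<Rightarrow> ('g \<Rightarrow> 'x) \<Rightarrow> real" and \<sigma> :: "nat \<Rightarrow> 'g \<Rightarrow> 'x"
  assumes "compatible_metric d"
  shows "\<exists>l r. strict_mono r \<and> (\<forall>\<gamma>. eventually (\<lambda>n. \<sigma> (r n) \<gamma> = l \<gamma>) sequentially)
     \<and> (\<forall>e>0. eventually (\<lambda>n. d (\<sigma> (r n)) l < e) sequentially)"
proof -
  interpret M: Metric_space UNIV d using assms unfolding compatible_metric_def by blast
  have top: "M.mtopology = product_topology (\<lambda>_. discrete_topology (UNIV::'x set)) (UNIV::'g set)"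
    using assms unfolding compatible_metric_def by blast
  have "compact_space M.mtopology"
    unfolding top by (simp add: compact_space_product_topology compact_space_discrete_topology)
  then have "\<exists>l r. l \<in> UNIV \<and> strict_mono r \<and> limitin M.mtopology (\<sigma> \<circ> r) l sequentially"
    unfolding M.compact_space_sequentially by (simp only: subset_UNIV simp_thms)
  then obtain l r where r: "strict_mono r" and lim: "limitin M.mtopology (\<sigma> \<circ> r) l sequentially"
    by blast
  have 1: "\<forall>e>0. eventually (\<lambda>n. d (\<sigma> (r n)) l < e) sequentially"
    using lim unfolding M.limitin_metric by auto
  have "limitin (product_topology (\<lambda>_. discrete_topology (UNIV::'x set)) (UNIV::'g set)) (\<sigma> \<circ> r) l sequentially"
    using lim top by simp
  then have L: "\<forall>\<gamma>. limitin (discrete_topology UNIV) (\<lambda>c. (\<sigma> \<circ> r) c \<gamma>) (l \<gamma>) sequentially"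
    unfolding limitin_componentwise by blast
  have 2: "\<forall>\<gamma>. eventually (\<lambda>n. \<sigma> (r n) \<gamma> = l \<gamma>) sequentially"
  proof
    fix \<gamma> :: 'g
    have "limitin (discrete_topology UNIV) (\<lambda>c. (\<sigma> \<circ> r) c \<gamma>) (l \<gamma>) sequentially"
      using L by blast
    then have "eventually (\<lambda>c. (\<sigma> \<circ> r) c \<gamma> \<in> {l \<gamma>}) sequentially"
      unfolding limitin_def by (meson openin_discrete_topology subset_UNIV insertI1)
    then show "eventually (\<lambda>n. \<sigma> (r n) \<gamma> = l \<gamma>) sequentially" by simp
  qed
  show ?thesis using r 1 2 by blast
qed

lemma conv_coord:
  fixes d :: "('g \<Rightarrow> 'x::finite) \<Rightarrow> ('g \<Rightarrow> 'x) \<Rightarrow> real" and f :: "nat \<Rightarrow> 'g \<Rightarrow> 'x"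
  assumes "compatible_metric d" and "\<forall>e>0. eventually (\<lambda>n. d (f n) l < e) sequentially"
  shows "eventually (\<lambda>n. f n \<gamma> = l \<gamma>) sequentially"
proof -
  interpret M: Metric_space UNIV d using assms unfolding compatible_metric_def by blast
  have top: "M.mtopology = product_topology (\<lambda>_. discrete_topology (UNIV::'x set)) (UNIV::'g set)"
    using assms unfolding compatible_metric_def by blast
  have "limitin M.mtopology f l sequentially"
    unfolding M.limitin_metric using assms(2) by auto
  then have "limitin (product_topology (\<lambda>_. discrete_topology (UNIV::'x set)) (UNIV::'g set)) f l sequentially"
    using top by simp
  then have "limitin (discrete_topology UNIV) (\<lambda>c. f c \<gamma>) (l \<gamma>) sequentially"
    unfolding limitin_componentwise by blast
  then have "eventually (\<lambda>c. f c \<gamma> \<in> {l \<gamma>}) sequentially"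
    unfolding limitin_def by (meson openin_discrete_topology subset_UNIV insertI1)
  then show ?thesis by simp
qed

lemma ev_subseq:
  assumes "strict_mono (r::nat\<Rightarrow>nat)" "eventually P sequentially"
  shows "eventually (\<lambda>n. P (r n)) sequentially"
proof -
  obtain N where "\<forall>n\<ge>N. P n" using assms(2) unfolding eventually_sequentially by blast
  then show ?thesis unfolding eventually_sequentially
    by (meson assms(1) le_trans seq_suble)
qed

lemma sep_lemma:
  fixes d :: "('g \<Rightarrow> 'x::finite) \<Rightarrow> ('g \<Rightarrow> 'x) \<Rightarrow> real"
  assumes cm: "compatible_metric d" and fin: "finite F"
  shows "\<exists>s>0. \<forall>z w. d z w < s \<longrightarrow> (\<forall>\<gamma>\<in>F. z \<gamma> = w \<gamma>)"
proof (rule ccontr)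
  interpret M: Metric_space UNIV d using assms unfolding compatible_metric_def by blast
  assume "\<not> ?thesis"
  then have "\<forall>n. \<exists>z w. d z w < 1 / Suc n \<and> \<not> (\<forall>\<gamma>\<in>F. z \<gamma> = w \<gamma>)"
    by (metis of_nat_0_less_iff zero_less_Suc zero_less_divide_1_iff)
  then obtain Z W where ZW: "\<And>n. d (Z n) (W n) < 1 / Suc n \<and> \<not> (\<forall>\<gamma>\<in>F. Z n \<gamma> = W n \<gamma>)"
    by metis
  obtain l r where r: "strict_mono r" and lz: "\<forall>e>0. eventually (\<lambda>n. d (Z (r n)) l < e) sequentially"
    using seq_compact[OF cm, of Z] by blast
  have lw: "\<forall>e>0. eventually (\<lambda>n. d (W (r n)) l < e) sequentially"
  proof (intro allI impI)
    fix e :: real assume e: "e > 0"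
    obtain N where N: "1 / Suc N < e/2"
      using e by (metis half_gt_zero nat_approx_posE)
    have "eventually (\<lambda>n. n \<ge> N) sequentially" by (simp add: eventually_ge_at_top)
    then have "eventually (\<lambda>n. r n \<ge> N) sequentially"
      using ev_subseq[OF r] by blast
    moreover have "eventually (\<lambda>n. d (Z (r n)) l < e/2) sequentially" using lz e half_gt_zero by blast
    ultimately show "eventually (\<lambda>n. d (W (r n)) l < e) sequentially"
    proof (rule eventually_elim2)
      fix n assume a: "N \<le> r n" "d (Z (r n)) l < e / 2"
      have "1 / real (Suc (r n)) \<le> 1 / Suc N"
        using a(1) by (simp add: frac_le)
      then have "d (W (r n)) (Z (r n)) < e/2" using ZW[of "r n"] N M.commute[of "W (r n)" "Z (r n)"] by linarith
      then show "d (W (r n)) l < e" using M.triangle[of "W (r n)" "Z (r n)" l] a(2) by simp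
    qed
  qed
  have "\<forall>\<gamma>\<in>F. eventually (\<lambda>n. Z (r n) \<gamma> = l \<gamma> \<and> W (r n) \<gamma> = l \<gamma>) sequentially"
    using conv_coord[OF cm, of "\<lambda>n. Z (r n)"] conv_coord[OF cm, of "\<lambda>n. W (r n)"] lz lw
    by (simp add: eventually_conj_iff)
  then have "eventually (\<lambda>n. \<forall>\<gamma>\<in>F. Z (r n) \<gamma> = l \<gamma> \<and> W (r n) \<gamma> = l \<gamma>) sequentially"
    using fin by (simp add: eventually_ball_finite)
  then obtain n where "\<forall>\<gamma>\<in>F. Z (r n) \<gamma> = l \<gamma> \<and> W (r n) \<gamma> = l \<gamma>"
    using eventually_happens'[OF sequentially_bot] by blast
  then show False using ZW[of "r n"] by auto
qed

lemma close_lemma: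
  fixes d :: "('g::countable \<Rightarrow> 'x::finite) \<Rightarrow> ('g \<Rightarrow> 'x) \<Rightarrow> real"
  assumes cm: "compatible_metric d" and s: "s > 0"
  shows "\<exists>F. finite F \<and> (\<forall>z w. (\<forall>\<gamma>\<in>F. z \<gamma> = w \<gamma>) \<longrightarrow> d z w < s)"
proof (rule ccontr)
  interpret M: Metric_space UNIV d using assms unfolding compatible_metric_def by blast
  assume nt: "\<not> ?thesis"
  have "\<exists>z w. (\<forall>\<gamma>\<in>from_nat ` {..<n}. z \<gamma> = w \<gamma>) \<and> \<not> d z w < s" for n
  proof -
    have "finite (from_nat ` {..<n} :: 'g set)" by simp
    then show ?thesis using nt by blast
  qed
  then obtain Z W where ZW: "\<And>n. (\<forall>\<gamma>\<in>from_nat ` {..<n}. Z n \<gamma> = W n \<gamma>) \<and> \<not> d (Z n) (W n) < s"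
    by metis
  obtain l1 r1 where r1: "strict_mono r1" and l1: "\<forall>e>0. eventually (\<lambda>n. d (Z (r1 n)) l1 < e) sequentially"
    using seq_compact[OF cm, of Z] by blast
  obtain l2 r2 where r2: "strict_mono r2" and l2: "\<forall>e>0. eventually (\<lambda>n. d (W (r1 (r2 n))) l2 < e) sequentially"
    using seq_compact[OF cm, of "\<lambda>n. W (r1 n)"] by blast
  define r where "r = r1 \<circ> r2"
  have r: "strict_mono r" unfolding r_def using r1 r2 by (simp add: strict_mono_o)
  have l1': "\<forall>e>0. eventually (\<lambda>n. d (Z (r n)) l1 < e) sequentially"
  proof (intro allI impI)
    fix e :: real assume "e > 0"
    then show "eventually (\<lambda>n. d (Z (r n)) l1 < e) sequentially"
      unfolding r_def using l1 ev_subseq[OF r2, of "\<lambda>n. d (Z (r1 n)) l1 < e"] by simp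
  qed
  have l2': "\<forall>e>0. eventually (\<lambda>n. d (W (r n)) l2 < e) sequentially"
    unfolding r_def using l2 by simp
  have "l1 = l2"
  proof (rule ext)
    fix \<gamma> :: 'g
    have ev1: "eventually (\<lambda>n. n \<ge> Suc (to_nat \<gamma>)) sequentially" by (rule eventually_ge_at_top)
    have ev2: "eventually (\<lambda>n. Z (r n) \<gamma> = l1 \<gamma>) sequentially"
      using conv_coord[OF cm, of "\<lambda>n. Z (r n)" l1] l1' by blast
    have ev3: "eventually (\<lambda>n. W (r n) \<gamma> = l2 \<gamma>) sequentially"
      using conv_coord[OF cm, of "\<lambda>n. W (r n)" l2] l2' by blast
    have "eventually (\<lambda>n. n \<ge> Suc (to_nat \<gamma>) \<and> Z (r n) \<gamma> = l1 \<gamma> \<and> W (r n) \<gamma> = l2 \<gamma>) sequentially"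
      using ev1 ev2 ev3 by (simp add: eventually_conj_iff)
    then obtain n where n: "n \<ge> Suc (to_nat \<gamma>)" "Z (r n) \<gamma> = l1 \<gamma>" "W (r n) \<gamma> = l2 \<gamma>"
      using eventually_happens'[OF sequentially_bot] by blast
    have "to_nat \<gamma> < r n" using seq_suble[OF r, of n] n(1) by linarith
    then have "\<gamma> \<in> from_nat ` {..<r n}"
      using from_nat_to_nat[of \<gamma>] by (metis imageI lessThan_iff)
    then have "Z (r n) \<gamma> = W (r n) \<gamma>" using ZW[of "r n"] by blast
    then show "l1 \<gamma> = l2 \<gamma>" using n by simp
  qed
  have h: "s/2 > 0" using s by simp
  have "eventually (\<lambda>n. d (Z (r n)) l1 < s/2 \<and> d (W (r n)) l2 < s/2) sequentially"
    using l1'[rule_format, OF h] l2'[rule_format, OF h] by (rule eventually_conj)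
  then obtain n where "d (Z (r n)) l1 < s/2" "d (W (r n)) l2 < s/2"
    using eventually_happens'[OF sequentially_bot] by blast
  then have "d (Z (r n)) (W (r n)) < s"
    using M.triangle[of "Z (r n)" l1 "W (r n)"] M.commute[of "W (r n)" l2] \<open>l1 = l2\<close> by simp
  then show False using ZW[of "r n"] by linarith
qed



lemma gs_iter: "(gshift \<phi> ^^ i) x = (\<lambda>\<alpha>. x ((\<phi> ^^ i) \<alpha>))"
proof (induction i arbitrary: x)
  case 0 then show ?case by simp
next
  case (Suc i)
  have "(gshift \<phi> ^^ Suc i) x = gshift \<phi> ((gshift \<phi> ^^ i) x)" by simp
  also have "\<dots> = (\<lambda>\<alpha>. x ((\<phi> ^^ i) (\<phi> \<alpha>)))" by (simp add: Suc gshift_def)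
  also have "\<dots> = (\<lambda>\<alpha>. x ((\<phi> ^^ Suc i) \<alpha>))" by (simp add: funpow_Suc_right del: funpow.simps)
  finally show ?case .
qed

lemma L1:
  fixes f :: "nat \<Rightarrow> real"
  assumes "\<And>n. \<exists>m\<ge>n. f m \<le> c"
  shows "liminf (\<lambda>n. ereal (f n)) \<le> ereal c"
  unfolding liminf_SUP_INF
proof (rule SUP_least)
  fix n :: nat
  obtain m where "m \<ge> n" "f m \<le> c" using assms by blast
  then show "(INF m\<in>{n..}. ereal (f m)) \<le> ereal c"
    by (intro INF_lower2[of m]) auto
qed

lemma L2:
  fixes f :: "nat \<Rightarrow> real"
  assumes "\<And>m. m \<ge> N \<Longrightarrow> c \<le> f m"
  shows "ereal c \<le> liminf (\<lambda>n. ereal (f n))"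
  unfolding liminf_SUP_INF
  by (rule SUP_upper2[of N]) (auto intro!: INF_greatest assms)

lemma L3:
  fixes f :: "nat \<Rightarrow> real"
  assumes "\<And>n. \<exists>m\<ge>n. c \<le> f m"
  shows "ereal c \<le> limsup (\<lambda>n. ereal (f n))"
  unfolding limsup_INF_SUP
proof (rule INF_greatest)
  fix n :: nat
  obtain m where "m \<ge> n" "c \<le> f m" using assms by blast
  then show "ereal c \<le> (SUP m\<in>{n..}. ereal (f m))"
    by (intro SUP_upper2[of m]) auto
qed

lemma L4:
  fixes f :: "nat \<Rightarrow> real"
  assumes "\<And>m. m \<ge> N \<Longrightarrow> f m \<le> c"
  shows "limsup (\<lambda>n. ereal (f n)) \<le> ereal c"
  unfolding limsup_INF_SUP
  by (rule INF_lower2[of N]) (auto intro!: SUP_least assms)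

lemma xi_le: "xi f d x y t n \<le> n"
proof -
  have "{i. i < n \<and> d ((f ^^ i) x) ((f ^^ i) y) < t} \<subseteq> {..<n}" by auto
  then show ?thesis unfolding xi_def by (metis card_lessThan card_mono finite_lessThan)
qed

lemma card_mono_pred:
  fixes n :: nat
  assumes "\<And>i. i < n \<Longrightarrow> P i \<Longrightarrow> Q i"
  shows "card {i. i < n \<and> P i} \<le> card {i. i < n \<and> Q i}"
proof (rule card_mono)
  show "finite {i. i < n \<and> Q i}" by (rule finite_subset[of _ "{..<n}"]) auto
qed (auto simp: assms)

lemma Flow_nonneg: "0 \<le> Flow f d x y t"
proof -
  have "ereal 0 \<le> Flow f d x y t" unfolding Flow_def by (rule L2[of 0]) auto
  then show ?thesis by (simp add: zero_ereal_def)
qed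

lemma Fup_le1: "Fup f d x y t \<le> 1"
proof -
  have "Fup f d x y t \<le> ereal 1" unfolding Fup_def
    by (rule L4[of 1]) (simp add: xi_le divide_le_eq_1)
  then show ?thesis by (simp add: one_ereal_def)
qed

lemma uncountable_bool_seq: "uncountable (UNIV :: (nat \<Rightarrow> bool) set)"
proof
  assume c: "countable (UNIV :: (nat \<Rightarrow> bool) set)"
  define z where "z n = (\<not> from_nat_into (UNIV :: (nat \<Rightarrow> bool) set) n n)" for n
  have "z \<in> range (from_nat_into (UNIV :: (nat \<Rightarrow> bool) set))"
    using range_from_nat_into[OF _ c] by simp
  then obtain n where "z = from_nat_into UNIV n" by blast
  then have "z n = (\<not> z n)" using z_def by metis
  then show False by simp
qed

lemma per_mult:
  fixes g :: "nat \<Rightarrow> 'a"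
  assumes "\<And>i. i \<ge> a \<Longrightarrow> g (i + q) = g i"
  shows "i \<ge> a \<Longrightarrow> g (i + k * q) = g i"
proof (induction k)
  case 0 then show ?case by simp
next
  case (Suc k)
  have "g (i + Suc k * q) = g ((i + k * q) + q)" by (simp add: algebra_simps)
  also have "\<dots> = g (i + k * q)" using assms Suc.prems by simp
  also have "\<dots> = g i" using Suc by simp
  finally show ?case .
qed

lemma eq_per:
  fixes \<phi> :: "'a \<Rightarrow> 'a"
  assumes "(\<phi> ^^ n) \<gamma> = (\<phi> ^^ m) \<gamma>" "n < m" "i \<ge> n"
  shows "(\<phi> ^^ (i + (m - n))) \<gamma> = (\<phi> ^^ i) \<gamma>"
proof -
  have "(\<phi> ^^ (i + (m - n))) \<gamma> = (\<phi> ^^ (i - n)) ((\<phi> ^^ m) \<gamma>)"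
  proof -
    have e: "i + (m - n) = (i - n) + m" using assms by simp
    show ?thesis by (simp only: e funpow_add comp_apply)
  qed
  also have "\<dots> = (\<phi> ^^ (i - n)) ((\<phi> ^^ n) \<gamma>)" using assms by simp
  also have "\<dots> = (\<phi> ^^ i) \<gamma>"
  proof -
    have e: "i = (i - n) + n" using assms by simp
    show ?thesis by (subst (2) e, simp only: funpow_add comp_apply)
  qed
  finally show ?thesis .
qed

lemma qp_per:
  assumes "quasi_periodic \<phi> \<gamma>"
  shows "\<exists>a q. q > 0 \<and> (\<forall>i\<ge>a. (\<phi> ^^ (i + q)) \<gamma> = (\<phi> ^^ i) \<gamma>)"
proof -
  have "finite (range (\<lambda>n. (\<phi> ^^ n) \<gamma>))"
    using assms unfolding quasi_periodic_def by (simp add: full_SetCompr_eq)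
  then have "\<not> inj (\<lambda>n. (\<phi> ^^ n) \<gamma>)" using range_inj_infinite by blast
  then obtain n m where nm: "n \<noteq> m" "(\<phi> ^^ n) \<gamma> = (\<phi> ^^ m) \<gamma>" unfolding inj_def by blast
  show ?thesis
  proof (cases "n < m")
    case True then show ?thesis using eq_per[OF nm(2) True] by (intro exI[of _ n] exI[of _ "m - n"]) auto
  next
    case False then have "m < n" using nm by simp
    then show ?thesis using eq_per[OF nm(2)[symmetric]] by (intro exI[of _ m] exI[of _ "n - m"]) auto
  qed
qed

lemma nqp_inj:
  assumes "\<not> quasi_periodic \<phi> \<theta>"
  shows "inj (\<lambda>n. (\<phi> ^^ n) \<theta>)"
proof (rule ccontr)
  assume "\<not> inj (\<lambda>n. (\<phi> ^^ n) \<theta>)"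
  then obtain n m where nm: "n \<noteq> m" "(\<phi> ^^ n) \<theta> = (\<phi> ^^ m) \<theta>" unfolding inj_def by blast
  then obtain a b where ab: "a < b" "(\<phi> ^^ a) \<theta> = (\<phi> ^^ b) \<theta>"
    by (metis linorder_neqE_nat)
  have "(\<phi> ^^ i) \<theta> \<in> (\<lambda>j. (\<phi> ^^ j) \<theta>) ` {..<b}" for i
  proof (induction i rule: less_induct)
    case (less i)
    show ?case
    proof (cases "i < b")
      case True then show ?thesis by auto
    next
      case False
      then have "i - (b - a) \<ge> a" "i - (b - a) < i" using ab by auto
      moreover have "(\<phi> ^^ (i - (b - a) + (b - a))) \<theta> = (\<phi> ^^ (i - (b - a))) \<theta>"
        using eq_per[OF ab(2) ab(1)] calculation(1) by blast
      moreover have "i - (b - a) + (b - a) = i" using False ab by auto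
      ultimately show ?thesis using less by metis
    qed
  qed
  then have "{(\<phi> ^^ n) \<theta> | n. True} \<subseteq> (\<lambda>j. (\<phi> ^^ j) \<theta>) ` {..<b}" by blast
  then have "finite {(\<phi> ^^ n) \<theta> | n. True}" using finite_subset by blast
  then show False using assms unfolding quasi_periodic_def by simp
qed



lemma per_fin:
  fixes \<phi> :: "'a \<Rightarrow> 'a"
  assumes "finite F" "\<forall>\<gamma>\<in>F. quasi_periodic \<phi> \<gamma>"
  shows "\<exists>N p. p > 0 \<and> (\<forall>i\<ge>N. \<forall>\<gamma>\<in>F. (\<phi> ^^ (i + p)) \<gamma> = (\<phi> ^^ i) \<gamma>)"
  using assms
proof (induction F rule: finite_induct)
  case empty then show ?case by (intro exI[of _ 0] exI[of _ 1]) simp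
next
  case (insert \<gamma> F)
  have "\<forall>\<gamma>\<in>F. quasi_periodic \<phi> \<gamma>" using insert.prems by simp
  then obtain N p where Np: "p > 0" "\<forall>i\<ge>N. \<forall>\<gamma>\<in>F. (\<phi> ^^ (i + p)) \<gamma> = (\<phi> ^^ i) \<gamma>"
    using insert.IH by blast
  have "quasi_periodic \<phi> \<gamma>" using insert.prems by simp
  then obtain a q where aq: "q > 0" "\<forall>i\<ge>a. (\<phi> ^^ (i + q)) \<gamma> = (\<phi> ^^ i) \<gamma>"
    using qp_per[of \<phi> \<gamma>] by blast
  have pq: "p * q > 0" using Np aq by simp
  have "(\<phi> ^^ (i + p * q)) \<gamma>' = (\<phi> ^^ i) \<gamma>'" if i: "max N a \<le> i" and g: "\<gamma>' \<in> insert \<gamma> F" for i \<gamma>'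

    proof (cases "\<gamma>' = \<gamma>")
      case True
      have "(\<phi> ^^ (i + p * q)) \<gamma> = (\<phi> ^^ i) \<gamma>"
        by (rule per_mult[of a "\<lambda>i. (\<phi> ^^ i) \<gamma>" q i p]) (use aq i in auto)
      then show ?thesis using True by simp
    next
      case False
      then have "\<gamma>' \<in> F" using g by simp
      have "(\<phi> ^^ (i + q * p)) \<gamma>' = (\<phi> ^^ i) \<gamma>'"
        by (rule per_mult[where g="\<lambda>i. (\<phi> ^^ i) \<gamma>'" and a=N and q=p and k=q]) (use Np i \<open>\<gamma>' \<in> F\<close> in auto)
      then show ?thesis by (simp add: mult.commute)
    qed
  then show ?case using pq by blast
qed

lemma count_bound:
  fixes p n i0 :: nat
  assumes p: "p > 0" and n: "n \<ge> 2 * (i0 + p)" and P: "\<And>k. \<not> P (i0 + k * p)"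
  shows "real (card {i. i < n \<and> P i}) \<le> real n * (1 - 1 / (2 * p))"
proof -
  define m where "m = (n - i0) div p"
  define B where "B = (\<lambda>k. i0 + k * p) ` {..<m}"
  have injB: "inj_on (\<lambda>k. i0 + k * p) {..<m}" using p by (auto simp: inj_on_def)
  have cB: "card B = m" unfolding B_def using card_image[OF injB] by simp
  have mp: "m * p \<le> n - i0" unfolding m_def by (simp add: div_times_less_eq_dividend)
  have BS: "B \<subseteq> {..<n}"
  proof
    fix x assume "x \<in> B"
    then obtain k where k: "k < m" "x = i0 + k * p" unfolding B_def by auto
    have "k * p < m * p" using k p by simp
    moreover have "m * p + i0 \<le> n" using mp n by simp
    ultimately have "x < n" using k(2) by linarith
    then show "x \<in> {..<n}" by simp
  qed
  have sub: "{i. i < n \<and> P i} \<subseteq> {..<n} - B" using P unfolding B_def by auto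
  have "card {i. i < n \<and> P i} \<le> card ({..<n} - B)"
    by (rule card_mono[OF _ sub]) simp
  also have "\<dots> = n - m" using card_Diff_subset[OF _ BS] cB BS
    by (metis card_lessThan finite_subset finite_lessThan)
  finally have c1: "card {i. i < n \<and> P i} \<le> n - m" .
  have "n - i0 < m * p + p"
  proof -
    have "n - i0 = (n - i0) div p * p + (n - i0) mod p" by simp
    moreover have "(n - i0) mod p < p" using p by simp
    ultimately show ?thesis unfolding m_def by linarith
  qed
  then have m2: "n \<le> 2 * (m * p)" using n by arith
  have "m \<le> m * p" using p by simp
  then have mn: "m \<le> n" using mp by arith
  have "real (card {i. i < n \<and> P i}) \<le> real (n - m)" using c1 by simp
  then have "real (card {i. i < n \<and> P i}) \<le> real n - real m" using of_nat_diff[OF mn, where 'a=real] by linarith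
  also have "\<dots> \<le> real n * (1 - 1 / (2 * p))"
  proof -
    have "real n \<le> 2 * real m * real p" using m2 by (metis of_nat_le_iff of_nat_mult of_nat_numeral mult.assoc)
    then have "real n / (2 * p) \<le> real m" using p by (simp add: divide_le_eq mult_ac)
    then show ?thesis by (simp add: algebra_simps)
  qed
  finally show ?thesis .
qed

lemma no_dc2:
  fixes \<phi> :: "'g::countable \<Rightarrow> 'g"
    and d :: "('g \<Rightarrow> 'x::finite) \<Rightarrow> ('g \<Rightarrow> 'x) \<Rightarrow> real"
  assumes cm: "compatible_metric d" and qp: "\<forall>\<theta>. quasi_periodic \<phi> \<theta>"
  shows "\<not> dc2_pair (gshift \<phi>) d x y"
proof
  assume "dc2_pair (gshift \<phi>) d x y"
  then obtain s0 where s0: "s0 > 0" "Flow (gshift \<phi>) d x y s0 < 1"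
    and up: "\<And>s. s > 0 \<Longrightarrow> Fup (gshift \<phi>) d x y s = 1"
    unfolding dc2_pair_def by blast
  obtain F where F: "finite F" "\<And>z w. (\<forall>\<gamma>\<in>F. z \<gamma> = w \<gamma>) \<Longrightarrow> d z w < s0"
    using close_lemma[OF cm s0(1)] by blast
  obtain s where s: "s > 0" "\<And>z w. d z w < s \<Longrightarrow> (\<forall>\<gamma>\<in>F. z \<gamma> = w \<gamma>)"
    using sep_lemma[OF cm F(1)] by blast
  obtain N p where Np: "p > 0" "\<forall>i\<ge>N. \<forall>\<gamma>\<in>F. (\<phi> ^^ (i + p)) \<gamma> = (\<phi> ^^ i) \<gamma>"
    using per_fin[OF F(1)] qp by blast
  define Ag where "Ag i = (\<forall>\<gamma>\<in>F. x ((\<phi> ^^ i) \<gamma>) = y ((\<phi> ^^ i) \<gamma>))" for i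
  have Agd0: "d ((gshift \<phi> ^^ i) x) ((gshift \<phi> ^^ i) y) < s0" if "Ag i" for i
    using F(2)[of "(gshift \<phi> ^^ i) x" "(gshift \<phi> ^^ i) y"] that unfolding Ag_def gs_iter by simp
  have Agd: "Ag i" if "d ((gshift \<phi> ^^ i) x) ((gshift \<phi> ^^ i) y) < s" for i
    using s(2)[OF that] unfolding Ag_def gs_iter by simp
  have Agp: "Ag (i + p) = Ag i" if "i \<ge> N" for i
    unfolding Ag_def using Np that by simp
  show False
  proof (cases "\<forall>i\<ge>N. Ag i")
    case True
    have "1 \<le> Flow (gshift \<phi>) d x y s0"
    proof (rule ereal_le_epsilon2)
      fix e :: real assume e: "e > 0"
      obtain M :: nat where M: "real N / e < M" using reals_Archimedean2 by blast
      have "ereal (1 - e) \<le> Flow (gshift \<phi>) d x y s0"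
        unfolding Flow_def
      proof (rule L2[of "max M 1"])
        fix n assume n: "max M 1 \<le> n"
        have "{N..<n} \<subseteq> {i. i < n \<and> d ((gshift \<phi> ^^ i) x) ((gshift \<phi> ^^ i) y) < s0}"
          using True Agd0 by auto
        then have "card {N..<n} \<le> xi (gshift \<phi>) d x y s0 n"
          unfolding xi_def by (intro card_mono) (auto intro: finite_subset[of _ "{..<n}"])
        then have c: "real n - real N \<le> real (xi (gshift \<phi>) d x y s0 n)" by simp
        have np: "real n > 0" using n by simp
        have "real N < e * real M" using M e by (simp add: divide_less_eq mult.commute)
        moreover have "real M \<le> real n" using n by simp
        ultimately have "real N < e * real n" using mult_left_mono[of "real M" "real n" e] e by linarith
        then have "(1 - e) * real n \<le> real (xi (gshift \<phi>) d x y s0 n)" using c by (simp add: algebra_simps)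
        then show "1 - e \<le> real (xi (gshift \<phi>) d x y s0 n) / real n" using np by (simp add: le_divide_eq)
      qed
      then have "ereal (1 - e) + ereal e \<le> Flow (gshift \<phi>) d x y s0 + ereal e"
        by (rule add_right_mono)
      then show "1 \<le> Flow (gshift \<phi>) d x y s0 + ereal e" by (simp add: one_ereal_def)
    qed
    then show False using s0(2) by simp
  next
    case False
    then obtain i0 where i0: "i0 \<ge> N" "\<not> Ag i0" by blast
    have nAg: "\<not> Ag (i0 + k * p)" for k
      using per_mult[of N Ag p i0 k] Agp i0 by simp
    have "Fup (gshift \<phi>) d x y s \<le> ereal (1 - 1 / (2 * p))"
      unfolding Fup_def
    proof (rule L4[of "2 * (i0 + p)"])
      fix n assume n: "2 * (i0 + p) \<le> n"
      have "real (xi (gshift \<phi>) d x y s n) \<le> real n * (1 - 1 / (2 * p))"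
        unfolding xi_def
      proof (rule count_bound[OF Np(1) n])
        fix k
        show "\<not> d ((gshift \<phi> ^^ (i0 + k * p)) x) ((gshift \<phi> ^^ (i0 + k * p)) y) < s"
          using Agd[of "i0 + k * p"] nAg[of k] by auto
      qed
      moreover have "real n > 0" using n Np by simp
      ultimately show "real (xi (gshift \<phi>) d x y s n) / real n \<le> 1 - 1 / (2 * p)"
        by (simp add: divide_le_eq mult.commute)
    qed
    also have "\<dots> < 1" using Np by simp
    finally show False using up[OF s(1)] by simp
  qed
qed



definition jf :: "nat \<Rightarrow> nat" where "jf k = fst (prod_decode (k div 2))"

definition useq :: "(nat \<Rightarrow> bool) \<Rightarrow> nat \<Rightarrow> bool" where
  "useq z m = (\<exists>k. fact k \<le> m \<and> m < fact (Suc k) \<and> odd k \<and> z (jf k))"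

definition Xpt :: "('g \<Rightarrow> 'g) \<Rightarrow> 'g \<Rightarrow> 'x \<Rightarrow> 'x \<Rightarrow> (nat \<Rightarrow> bool) \<Rightarrow> 'g \<Rightarrow> 'x" where
  "Xpt \<phi> \<theta> a b z \<alpha> = (if \<exists>m. \<alpha> = (\<phi> ^^ m) \<theta> \<and> useq z m then b else a)"

lemma blk_unique:
  fixes m :: nat
  assumes "fact k \<le> m" "m < fact (Suc k)" "fact k' \<le> m" "m < fact (Suc k')"
  shows "k = k'"
proof (rule ccontr)
  assume "k \<noteq> k'"
  then consider "Suc k \<le> k'" | "Suc k' \<le> k" by linarith
  then show False
  proof cases
    case 1 then have "(fact (Suc k) :: nat) \<le> fact k'" by (rule fact_mono)
    then show False using assms by linarith
  next
    case 2 then have "(fact (Suc k') :: nat) \<le> fact k" by (rule fact_mono)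
    then show False using assms by linarith
  qed
qed

lemma useq_blk:
  assumes "fact k \<le> m" "m < fact (Suc k)"
  shows "useq z m = (odd k \<and> z (jf k))"
  unfolding useq_def using assms blk_unique[OF assms] by blast

lemma jf_odd: "jf (2 * prod_encode (j, t) + 1) = j"
  unfolding jf_def by simp

lemma Xpt_orbit:
  assumes "inj (\<lambda>m. (\<phi> ^^ m) \<theta>)"
  shows "Xpt \<phi> \<theta> a b z ((\<phi> ^^ m) \<theta>) = (if useq z m then b else a)"
proof -
  have "((\<phi> ^^ m) \<theta> = (\<phi> ^^ m') \<theta>) = (m = m')" for m'
    using assms unfolding inj_def by blast
  then show ?thesis unfolding Xpt_def by auto
qed

lemma Xpt_off:
  assumes "\<forall>m. \<alpha> \<noteq> (\<phi> ^^ m) \<theta>"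
  shows "Xpt \<phi> \<theta> a b z \<alpha> = a"
  using assms unfolding Xpt_def by auto

lemma offset:
  fixes \<phi> :: "'g \<Rightarrow> 'g"
  assumes inj: "inj (\<lambda>m. (\<phi> ^^ m) \<theta>)"
  shows "\<exists>C. \<forall>i m. (\<phi> ^^ i) \<gamma> = (\<phi> ^^ m) \<theta> \<longrightarrow> i \<le> m + C \<and> m \<le> i + C"
proof (cases "\<exists>i0 m0. (\<phi> ^^ i0) \<gamma> = (\<phi> ^^ m0) \<theta>")
  case False then show ?thesis by blast
next
  case True
  then obtain i0 m0 where h0: "(\<phi> ^^ i0) \<gamma> = (\<phi> ^^ m0) \<theta>" by blast
  have key: "m + i0 = m0 + i" if h: "(\<phi> ^^ i) \<gamma> = (\<phi> ^^ m) \<theta>" for i m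
  proof (cases "i0 \<le> i")
    case True
    have "(\<phi> ^^ i) \<gamma> = (\<phi> ^^ (i - i0)) ((\<phi> ^^ i0) \<gamma>)"
    proof -
      have e: "i = (i - i0) + i0" using True by simp
      show ?thesis by (subst e, simp only: funpow_add comp_apply)
    qed
    also have "\<dots> = (\<phi> ^^ (i - i0 + m0)) \<theta>" by (simp add: h0 funpow_add)
    finally have "(\<phi> ^^ m) \<theta> = (\<phi> ^^ (i - i0 + m0)) \<theta>" using h by simp
    then have "m = i - i0 + m0" using inj unfolding inj_def by blast
    then show ?thesis using True by simp
  next
    case False
    have "(\<phi> ^^ m0) \<theta> = (\<phi> ^^ (i0 - i)) ((\<phi> ^^ i) \<gamma>)"
    proof -
      have e: "i0 = (i0 - i) + i" using False by simp
      show ?thesis by (subst h0[symmetric], subst e, simp only: funpow_add comp_apply)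
    qed
    also have "\<dots> = (\<phi> ^^ (i0 - i + m)) \<theta>" by (simp add: h funpow_add)
    finally have "m0 = i0 - i + m" using inj unfolding inj_def by blast
    then show ?thesis using False by simp
  qed
  show ?thesis
    by (rule exI[of _ "i0 + m0"]) (use key in fastforce)
qed



lemma offset_fin:
  fixes \<phi> :: "'g \<Rightarrow> 'g"
  assumes inj: "inj (\<lambda>m. (\<phi> ^^ m) \<theta>)" and fin: "finite F"
  shows "\<exists>C. \<forall>\<gamma>\<in>F. \<forall>i m. (\<phi> ^^ i) \<gamma> = (\<phi> ^^ m) \<theta> \<longrightarrow> i \<le> m + C \<and> m \<le> i + C"
proof -
  have "\<forall>\<gamma>. \<exists>C. \<forall>i m. (\<phi> ^^ i) \<gamma> = (\<phi> ^^ m) \<theta> \<longrightarrow> i \<le> m + C \<and> m \<le> i + C"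
    using offset[OF inj] by blast
  then obtain Cf where Cf: "\<And>\<gamma> i m. (\<phi> ^^ i) \<gamma> = (\<phi> ^^ m) \<theta> \<Longrightarrow> i \<le> m + Cf \<gamma> \<and> m \<le> i + Cf \<gamma>"
    by metis
  have "Cf \<gamma> \<le> sum Cf F" if "\<gamma> \<in> F" for \<gamma>
    using member_le_sum[OF that, of Cf] fin by simp
  then show ?thesis using Cf by (intro exI[of _ "sum Cf F"]) fastforce
qed

lemma window_agree:
  fixes \<phi> :: "'g \<Rightarrow> 'g"
  assumes inj: "inj (\<lambda>m. (\<phi> ^^ m) \<theta>)"
    and C: "\<forall>\<gamma>\<in>F. \<forall>i m. (\<phi> ^^ i) \<gamma> = (\<phi> ^^ m) \<theta> \<longrightarrow> i \<le> m + C \<and> m \<le> i + C"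
    and w: "\<forall>m. i \<le> m + C \<and> m \<le> i + C \<longrightarrow> useq z m = useq z' m"
  shows "\<forall>\<gamma>\<in>F. (gshift \<phi> ^^ i) (Xpt \<phi> \<theta> a b z) \<gamma> = (gshift \<phi> ^^ i) (Xpt \<phi> \<theta> a b z') \<gamma>"
proof
  fix \<gamma> assume g: "\<gamma> \<in> F"
  show "(gshift \<phi> ^^ i) (Xpt \<phi> \<theta> a b z) \<gamma> = (gshift \<phi> ^^ i) (Xpt \<phi> \<theta> a b z') \<gamma>"
  proof (cases "\<exists>m. (\<phi> ^^ i) \<gamma> = (\<phi> ^^ m) \<theta>")
    case True
    then obtain m where m: "(\<phi> ^^ i) \<gamma> = (\<phi> ^^ m) \<theta>" by blast
    then have "useq z m = useq z' m" using C g w by blast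
    then show ?thesis unfolding gs_iter m Xpt_orbit[OF inj] by simp
  next
    case False
    then show ?thesis unfolding gs_iter using Xpt_off by metis
  qed
qed

lemma Xpt_inj:
  fixes \<phi> :: "'g \<Rightarrow> 'g"
  assumes inj: "inj (\<lambda>m. (\<phi> ^^ m) \<theta>)" and ab: "a \<noteq> b"
  shows "inj (Xpt \<phi> \<theta> a b)"
proof
  fix z z' assume eq: "Xpt \<phi> \<theta> a b z = Xpt \<phi> \<theta> a b z'"
  show "z = z'"
  proof
    fix j0
    define k where "k = 2 * prod_encode (j0, 0) + 1"
    have ok: "odd k" "jf k = j0" unfolding k_def using jf_odd by auto
    have "(fact k :: nat) < fact (Suc k)"
    proof -
      have "(0::nat) < fact k" by simp
      moreover have "k > 0" unfolding k_def by simp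
      ultimately show ?thesis by (simp add: fact_Suc)
    qed
    then have u: "useq w (fact k) = w j0" for w using useq_blk[of k "fact k" w] ok by simp
    have "Xpt \<phi> \<theta> a b z ((\<phi> ^^ fact k) \<theta>) = Xpt \<phi> \<theta> a b z' ((\<phi> ^^ fact k) \<theta>)" using eq by simp
    then have "useq z (fact k) = useq z' (fact k)" unfolding Xpt_orbit[OF inj] using ab by (auto split: if_splits)
    then show "z j0 = z' j0" using u by simp
  qed
qed



lemma real_diff_le: "real a - real b \<le> real (a - b)"
  by (cases "b \<le> a") (auto simp: of_nat_diff)

lemma flow_zero:
  fixes \<phi> :: "'g \<Rightarrow> 'g" and d :: "('g \<Rightarrow> 'x) \<Rightarrow> ('g \<Rightarrow> 'x) \<Rightarrow> real"
  assumes inj: "inj (\<lambda>m. (\<phi> ^^ m) \<theta>)" and ab: "a \<noteq> b"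
    and eps: "\<And>z w. d z w < \<epsilon> \<Longrightarrow> z \<theta> = w \<theta>"
    and zz: "z j0 \<noteq> z' j0"
  shows "Flow (gshift \<phi>) d (Xpt \<phi> \<theta> a b z) (Xpt \<phi> \<theta> a b z') \<epsilon> = 0"
proof -
  let ?X = "Xpt \<phi> \<theta> a b z" and ?Y = "Xpt \<phi> \<theta> a b z'"
  have A: "useq z i = useq z' i" if "d ((gshift \<phi> ^^ i) ?X) ((gshift \<phi> ^^ i) ?Y) < \<epsilon>" for i
  proof -
    have "(gshift \<phi> ^^ i) ?X \<theta> = (gshift \<phi> ^^ i) ?Y \<theta>" using eps[OF that] .
    then have "?X ((\<phi> ^^ i) \<theta>) = ?Y ((\<phi> ^^ i) \<theta>)" unfolding gs_iter .
    then show ?thesis unfolding Xpt_orbit[OF inj] using ab by (auto split: if_splits)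
  qed
  have "Flow (gshift \<phi>) d ?X ?Y \<epsilon> \<le> 0"
  proof (rule ereal_le_epsilon2)
    fix e :: real assume e: "e > 0"
    have "Flow (gshift \<phi>) d ?X ?Y \<epsilon> \<le> ereal e"
      unfolding Flow_def
    proof (rule L1)
      fix n
      obtain K :: nat where K: "1 / e < K" using reals_Archimedean2 by blast
      define t where "t = n + K"
      define k where "k = 2 * prod_encode (j0, t) + 1"
      define M where "M = (fact (Suc k) :: nat)"
      have ok: "odd k" "jf k = j0" unfolding k_def using jf_odd by auto
      have tk: "t \<le> k" unfolding k_def using le_prod_encode_2[of t j0] by simp
      have "Suc k \<le> M" unfolding M_def by (rule fact_ge_self)
      then have nM: "n \<le> M" using tk unfolding t_def by simp
      have sub: "{i. i < M \<and> d ((gshift \<phi> ^^ i) ?X) ((gshift \<phi> ^^ i) ?Y) < \<epsilon>} \<subseteq> {..<fact k}"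
      proof
        fix i assume i: "i \<in> {i. i < M \<and> d ((gshift \<phi> ^^ i) ?X) ((gshift \<phi> ^^ i) ?Y) < \<epsilon>}"
        then have eq: "useq z i = useq z' i" using A by blast
        show "i \<in> {..<fact k}"
        proof (rule ccontr)
          assume "i \<notin> {..<fact k}"
          then have "fact k \<le> i" by simp
          moreover have "i < fact (Suc k)" using i unfolding M_def by simp
          ultimately have "useq w i = w j0" for w using useq_blk[of k i w] ok by simp
          then show False using eq zz by simp
        qed
      qed
      have "xi (gshift \<phi>) d ?X ?Y \<epsilon> M \<le> fact k"
        unfolding xi_def using card_mono[OF _ sub] by simp
      then have x1: "real (xi (gshift \<phi>) d ?X ?Y \<epsilon> M) \<le> real (fact k)" by linarith
      define Fk where "Fk = real (fact k :: nat)"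
      have Fk: "Fk > 0" unfolding Fk_def by simp
      have MF: "real M = real (Suc k) * Fk" by (simp only: M_def Fk_def fact_Suc of_nat_mult of_nat_id)
      have "1 < e * K" using K e by (simp add: divide_less_eq mult.commute)
      moreover have "real K \<le> real (Suc k)" using tk unfolding t_def by simp
      ultimately have ek: "1 \<le> e * real (Suc k)" using mult_left_mono[of "real K" "real (Suc k)" e] e by linarith
      have f1: "Fk \<le> e * real (Suc k) * Fk" using mult_right_mono[OF ek, of Fk] Fk by simp
      have x1': "real (xi (gshift \<phi>) d ?X ?Y \<epsilon> M) \<le> Fk" using x1 by (simp only: Fk_def)
      have "e * real M = e * real (Suc k) * Fk" unfolding MF by (simp only: mult.assoc)
      then have "real (xi (gshift \<phi>) d ?X ?Y \<epsilon> M) \<le> e * real M" using x1' f1 by linarith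
      moreover have "real M > 0" using MF Fk by simp
      ultimately have "real (xi (gshift \<phi>) d ?X ?Y \<epsilon> M) / real M \<le> e" by (simp add: pos_divide_le_eq mult.commute)
      then show "\<exists>m\<ge>n. real (xi (gshift \<phi>) d ?X ?Y \<epsilon> m) / real m \<le> e" using nM by blast
    qed
    then show "Flow (gshift \<phi>) d ?X ?Y \<epsilon> \<le> 0 + ereal e" by simp
  qed
  then show ?thesis by (rule antisym[OF _ Flow_nonneg])
qed



lemma fup_one:
  fixes \<phi> :: "'g::countable \<Rightarrow> 'g" and d :: "('g \<Rightarrow> 'x::finite) \<Rightarrow> ('g \<Rightarrow> 'x) \<Rightarrow> real"
  assumes inj: "inj (\<lambda>m. (\<phi> ^^ m) \<theta>)" and cm: "compatible_metric d" and s: "s > 0"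
  shows "Fup (gshift \<phi>) d (Xpt \<phi> \<theta> a b z) (Xpt \<phi> \<theta> a b z') s = 1"
proof -
  let ?X = "Xpt \<phi> \<theta> a b z" and ?Y = "Xpt \<phi> \<theta> a b z'"
  obtain F where F: "finite F" "\<And>z w. (\<forall>\<gamma>\<in>F. z \<gamma> = w \<gamma>) \<Longrightarrow> d z w < s"
    using close_lemma[OF cm s] by blast
  obtain C where C: "\<forall>\<gamma>\<in>F. \<forall>i m. (\<phi> ^^ i) \<gamma> = (\<phi> ^^ m) \<theta> \<longrightarrow> i \<le> m + C \<and> m \<le> i + C"
    using offset_fin[OF inj F(1)] by blast
  have "1 \<le> Fup (gshift \<phi>) d ?X ?Y s"
  proof (rule ereal_le_epsilon2)
    fix e :: real assume e: "e > 0"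
    have "ereal (1 - e) \<le> Fup (gshift \<phi>) d ?X ?Y s"
      unfolding Fup_def
    proof (rule L3)
      fix n
      obtain K :: nat where K: "(1 + 2 * real C) / e < K" using reals_Archimedean2 by blast
      define k where "k = 2 * (n + K)"
      define M where "M = (fact (Suc k) :: nat)"
      have ek0: "\<not> odd k" unfolding k_def by simp
      have "Suc k \<le> M" unfolding M_def by (rule fact_ge_self)
      then have nM: "n \<le> M" unfolding k_def by simp
      have sub: "{fact k + C..<M - C} \<subseteq> {i. i < M \<and> d ((gshift \<phi> ^^ i) ?X) ((gshift \<phi> ^^ i) ?Y) < s}"
      proof
        fix i assume i: "i \<in> {fact k + C..<M - C}"
        have w: "\<forall>m. i \<le> m + C \<and> m \<le> i + C \<longrightarrow> useq z m = useq z' m"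
        proof (intro allI impI)
          fix m assume m: "i \<le> m + C \<and> m \<le> i + C"
          have "fact k \<le> m" "m < fact (Suc k)" using i m unfolding M_def by auto
          then show "useq z m = useq z' m" using useq_blk[of k m] ek0 by simp
        qed
        have "d ((gshift \<phi> ^^ i) ?X) ((gshift \<phi> ^^ i) ?Y) < s"
          by (rule F(2)) (rule window_agree[OF inj C w])
        moreover have "i < M" using i by (metis atLeastLessThan_iff diff_le_self less_le_trans)
        ultimately show "i \<in> {i. i < M \<and> d ((gshift \<phi> ^^ i) ?X) ((gshift \<phi> ^^ i) ?Y) < s}"
          by simp
      qed
      have "card {fact k + C..<M - C} \<le> xi (gshift \<phi>) d ?X ?Y s M"
        unfolding xi_def by (rule card_mono[OF _ sub]) (rule finite_subset[of _ "{..<M}"], auto)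
      then have "real (M - C - (fact k + C)) \<le> real (xi (gshift \<phi>) d ?X ?Y s M)" by simp
      moreover have "real M - real C - real (fact k + C) \<le> real (M - C - (fact k + C))"
        using real_diff_le[of M C] real_diff_le[of "M - C" "fact k + C"] by linarith
      ultimately have x1: "real M - real (fact k :: nat) - 2 * real C \<le> real (xi (gshift \<phi>) d ?X ?Y s M)"
        by simp
      define Fk where "Fk = real (fact k :: nat)"
      have Fk: "Fk \<ge> 1" unfolding Fk_def by simp
      have MF: "real M = real (Suc k) * Fk" by (simp only: M_def Fk_def fact_Suc of_nat_mult of_nat_id)
      have "1 + 2 * real C < e * K" using K e by (simp add: divide_less_eq mult.commute)
      moreover have "real K \<le> real (Suc k)" unfolding k_def by simp
      ultimately have ek: "1 + 2 * real C \<le> e * real (Suc k)"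
        using mult_left_mono[of "real K" "real (Suc k)" e] e by linarith
      have f1: "(1 + 2 * real C) * Fk \<le> e * real (Suc k) * Fk"
        using mult_right_mono[OF ek, of Fk] Fk by simp
      have f2: "2 * real C \<le> 2 * real C * Fk"
        using mult_left_mono[OF Fk, of "2 * real C"] by simp
      have f3: "e * real M = e * real (Suc k) * Fk" unfolding MF by (simp only: mult.assoc)
      have x1': "real M - Fk - 2 * real C \<le> real (xi (gshift \<phi>) d ?X ?Y s M)"
        using x1 by (simp only: Fk_def)
      have "(1 - e) * real M \<le> real (xi (gshift \<phi>) d ?X ?Y s M)"
        using x1' f1 f2 f3 by (simp add: algebra_simps)
      moreover have "real M > 0" using MF Fk by simp
      ultimately have "1 - e \<le> real (xi (gshift \<phi>) d ?X ?Y s M) / real M"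
        by (simp add: pos_le_divide_eq)
      then show "\<exists>m\<ge>n. 1 - e \<le> real (xi (gshift \<phi>) d ?X ?Y s m) / real m" using nM by blast
    qed
    then have "ereal (1 - e) + ereal e \<le> Fup (gshift \<phi>) d ?X ?Y s + ereal e"
      by (rule add_right_mono)
    then show "1 \<le> Fup (gshift \<phi>) d ?X ?Y s + ereal e" by (simp add: one_ereal_def)
  qed
  then show ?thesis by (rule antisym[OF Fup_le1])
qed



lemma nqp_uniform:
  fixes \<phi> :: "'g::countable \<Rightarrow> 'g" and d :: "('g \<Rightarrow> 'x::finite) \<Rightarrow> ('g \<Rightarrow> 'x) \<Rightarrow> real"
  assumes card: "CARD('x) \<ge> 2" and cm: "compatible_metric d" and nqp: "\<not> quasi_periodic \<phi> \<theta>"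
  shows "uniform_DC (gshift \<phi>) d"
proof -
  have inj: "inj (\<lambda>m. (\<phi> ^^ m) \<theta>)" by (rule nqp_inj[OF nqp])
  have "\<exists>a b::'x. a \<noteq> b"
  proof (rule ccontr)
    assume "\<not> ?thesis"
    then have "(UNIV :: 'x set) = {undefined}" by auto
    then have "CARD('x) = card {undefined :: 'x}" by (rule arg_cong)
    then have "CARD('x) = 1" by simp
    then show False using card by simp
  qed
  then obtain a b :: 'x where ab: "a \<noteq> b" by blast
  obtain \<epsilon> where eps: "\<epsilon> > 0" "\<And>z w. d z w < \<epsilon> \<Longrightarrow> (\<forall>\<gamma>\<in>{\<theta>}. z \<gamma> = w \<gamma>)"
    using sep_lemma[OF cm, of "{\<theta>}"] by blast
  have eps': "\<And>z w. d z w < \<epsilon> \<Longrightarrow> z \<theta> = w \<theta>" using eps(2) by blast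
  define A where "A = range (Xpt \<phi> \<theta> a b)"
  have injX: "inj (Xpt \<phi> \<theta> a b)" by (rule Xpt_inj[OF inj ab])
  have unc: "uncountable A"
  proof
    assume "countable A"
    then have "countable (UNIV :: (nat \<Rightarrow> bool) set)"
      unfolding A_def using countable_image_inj_on injX by blast
    then show False using uncountable_bool_seq by blast
  qed
  have pairs: "dc1_pair (gshift \<phi>) d x y \<and> Flow (gshift \<phi>) d x y \<epsilon> = 0"
    if xA: "x \<in> A" "y \<in> A" "x \<noteq> y" for x y
  proof -
    obtain z z' where zz: "x = Xpt \<phi> \<theta> a b z" "y = Xpt \<phi> \<theta> a b z'"
      using xA unfolding A_def by blast
    then have "z \<noteq> z'" using xA by blast
    then obtain j0 where j0: "z j0 \<noteq> z' j0" by blast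
    have fl: "Flow (gshift \<phi>) d x y \<epsilon> = 0" unfolding zz by (rule flow_zero[OF inj ab]) (erule eps', rule j0)
    have "\<forall>s>0. Fup (gshift \<phi>) d x y s = 1" unfolding zz using fup_one[OF inj cm] by blast
    then show ?thesis using fl eps(1) unfolding dc1_pair_def by blast
  qed
  have "Xpt \<phi> \<theta> a b (\<lambda>_. True) \<noteq> Xpt \<phi> \<theta> a b (\<lambda>_. False)"
  proof
    assume "Xpt \<phi> \<theta> a b (\<lambda>_. True) = Xpt \<phi> \<theta> a b (\<lambda>_. False)"
    then have "(\<lambda>_::nat. True) = (\<lambda>_. False)" using injX unfolding inj_def by blast
    then show False by (metis (full_types))
  qed
  then have "\<exists>x\<in>A. \<exists>y\<in>A. x \<noteq> y" unfolding A_def by blast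
  then have "dc1_scrambled (gshift \<phi>) d A" unfolding dc1_scrambled_def using pairs by blast
  then show ?thesis unfolding uniform_DC_def using unc eps(1) pairs by blast
qed

lemma dc1_dc2: "dc1_scrambled f d A \<Longrightarrow> dc2_scrambled f d A"
proof -
  have "dc1_pair f d x y \<Longrightarrow> dc2_pair f d x y" for x y
    unfolding dc1_pair_def dc2_pair_def using zero_less_one_ereal by auto
  then show "dc1_scrambled f d A \<Longrightarrow> dc2_scrambled f d A"
    unfolding dc1_scrambled_def dc2_scrambled_def by blast
qed

theorem theorem3p5:
  fixes \<phi> :: "'g::countable \<Rightarrow> 'g"
    and d :: "('g \<Rightarrow> 'x::finite) \<Rightarrow> ('g \<Rightarrow> 'x) \<Rightarrow> real"
  assumes "CARD('x) \<ge> 2"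
    and "compatible_metric d"
  shows "((\<exists>\<theta>. \<not> quasi_periodic \<phi> \<theta>) \<longleftrightarrow> uniform_DC (gshift \<phi>) d)
       \<and> ((\<exists>\<theta>. \<not> quasi_periodic \<phi> \<theta>) \<longleftrightarrow> DCu1 (gshift \<phi>) d)
       \<and> ((\<exists>\<theta>. \<not> quasi_periodic \<phi> \<theta>) \<longleftrightarrow> DCinf1 (gshift \<phi>) d)
       \<and> ((\<exists>\<theta>. \<not> quasi_periodic \<phi> \<theta>) \<longleftrightarrow> DC21 (gshift \<phi>) d)
       \<and> ((\<exists>\<theta>. \<not> quasi_periodic \<phi> \<theta>) \<longleftrightarrow> DCu2 (gshift \<phi>) d)
       \<and> ((\<exists>\<theta>. \<not> quasi_periodic \<phi> \<theta>) \<longleftrightarrow> DCinf2 (gshift \<phi>) d)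
       \<and> ((\<exists>\<theta>. \<not> quasi_periodic \<phi> \<theta>) \<longleftrightarrow> DC22 (gshift \<phi>) d)"
proof -
  let ?P = "\<exists>\<theta>. \<not> quasi_periodic \<phi> \<theta>"
  let ?f = "gshift \<phi>"
  have p_u: "?P \<Longrightarrow> uniform_DC ?f d" using nqp_uniform[OF assms] by blast
  have u_u1: "uniform_DC ?f d \<Longrightarrow> DCu1 ?f d"
  proof -
    assume "uniform_DC ?f d"
    then obtain A \<epsilon> where "uncountable A" "dc1_scrambled ?f d A"
      unfolding uniform_DC_def by (elim exE conjE) (rule that)
    then show ?thesis unfolding DCu1_def by (intro exI conjI)
  qed
  have uinf: "infinite A" if "uncountable A" for A :: "('g \<Rightarrow> 'x) set"
    using that countable_finite by auto
  have u1_i1: "DCu1 ?f d \<Longrightarrow> DCinf1 ?f d"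
  proof -
    assume "DCu1 ?f d"
    then obtain A where "uncountable A" "dc1_scrambled ?f d A" unfolding DCu1_def by blast
    then show ?thesis unfolding DCinf1_def using uinf by blast
  qed
  have i1_21: "DCinf1 ?f d \<Longrightarrow> DC21 ?f d" unfolding DCinf1_def DC21_def by blast
  have u1_u2: "DCu1 ?f d \<Longrightarrow> DCu2 ?f d"
  proof -
    assume "DCu1 ?f d"
    then obtain A where "uncountable A" "dc1_scrambled ?f d A" unfolding DCu1_def by blast
    then show ?thesis unfolding DCu2_def using dc1_dc2 by blast
  qed
  have u2_i2: "DCu2 ?f d \<Longrightarrow> DCinf2 ?f d"
  proof -
    assume "DCu2 ?f d"
    then obtain A where "uncountable A" "dc2_scrambled ?f d A" unfolding DCu2_def by blast
    then show ?thesis unfolding DCinf2_def using uinf by blast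
  qed
  have i2_22: "DCinf2 ?f d \<Longrightarrow> DC22 ?f d" unfolding DCinf2_def DC22_def by blast
  have d21_22: "DC21 ?f d \<Longrightarrow> DC22 ?f d"
  proof -
    assume "DC21 ?f d"
    then obtain A where "dc1_scrambled ?f d A" unfolding DC21_def by blast
    then show ?thesis unfolding DC22_def using dc1_dc2 by blast
  qed
  have d22_p: "DC22 ?f d \<Longrightarrow> ?P"
  proof (rule ccontr)
    assume "DC22 ?f d" "\<not> ?P"
    then obtain A where "dc2_scrambled ?f d A" unfolding DC22_def by blast
    then obtain x y where "dc2_pair ?f d x y" unfolding dc2_scrambled_def by blast
    moreover have "\<forall>\<theta>. quasi_periodic \<phi> \<theta>" using \<open>\<not> ?P\<close> by blast
    ultimately show False using no_dc2[OF assms(2)] by blast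
  qed
  show ?thesis
    using p_u u_u1 u1_i1 i1_21 u1_u2 u2_i2 i2_22 d21_22 d22_p by argo
qed

end
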